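(* Consider the variant of the Deferred-Revelation Auction (DRA) over a public ledger, described in the context, in which the ledger knows and enforces a fixed feasibility constraint $\mathcal{F}$ (so the auctioneer cannot misreport it). For any fixed downward-closed feasibility constraint $\mathcal{F}$ that is not a matroid, the DRA is not credible for any collateral $f$, even in an instance with a single real bidder whose value is drawn from the exponential distribution with mean $1$.
   Context: A feasibility constraint $\mathcal{F}$ is a downward-closed family of subsets of a finite ground set $E$ of bidder slots (sets of bids that may be allocated simultaneously); it is a matroid if it additionally satisfies the augmentation property (if $A,B\in\mathcal{F}$, $|A|>|B|$, then $B\cup\{a\}\in\mathcal{F}$ for some $a\in A\setminus B$). Values are independent, bidders quasi-linear; virtual value $\varphi(v)=v-\frac{1-F(v)}{f(v)}$. The exponential distribution with mean $1$ has CDF $1-e^{-t}$, virtual value $v-1$, monopoly reserve $1$. DRA over a public ledger (visible to all) with a perfectly hiding, perfectly binding, non-malleable commitment scheme: (1) every participant (real bidders and any fake bids fabricated by the auctioneer, each occupying an element of $E$) commits to a bid and deposits collateral $f$; the auctioneer reports distributions $\hat D_j$ (virtual values $\hat\varphi_j$) for all committed bids (it may choose the distributions of fake bids arbitrarily); (2) each committed bid is revealed or concealed, and collateral of concealed bids is burnt; (3) among revealed bids, the set $S\in\mathcal{F}$ maximizing $\sum_{i\in S}\hat\varphi_i(b_i)$ (lexicographic tie-breaking) is allocated, each allocated bidder paying its critical bid. The auctioneer chooses which fake bids to conceal after seeing revealed real bids. Its revenue is real bidders' payments minus burnt collateral of its concealed fake bids. The DRA is credible for collateral $f$ if, when real bidders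 bid truthfully, the auctioneer maximizes expected revenue by fabricating no bids and reporting true distributions. *)

theory Defs
  imports "HOL-Probability.Probability"
begin

definition downward_closed :: "'a set \<Rightarrow> 'a set set \<Rightarrow> bool" where
  "downward_closed E F \<longleftrightarrow> F \<subseteq> Pow E \<and> (\<forall>A\<in>F. \<forall>B. B \<subseteq> A \<longrightarrow> B \<in> F)"

definition is_matroid :: "'a set \<Rightarrow> 'a set set \<Rightarrow> bool" where
  "is_matroid E F \<longleftrightarrow> downward_closed E F \<and>
     (\<forall>A\<in>F. \<forall>B\<in>F. card A > card B \<longrightarrow> (\<exists>a\<in>A - B. insert a B \<in> F))"

definition virtual_value :: "(real \<Rightarrow> real) \<Rightarrow> (real \<Rightarrow> real) \<Rightarrow> real \<Rightarrow> real" where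
  "virtual_value G g b = b - (1 - G b) / g b"

definition valid_report :: "(real \<Rightarrow> real) \<Rightarrow> (real \<Rightarrow> real) \<Rightarrow> bool" where
  "valid_report G g \<longleftrightarrow> G 0 = 0 \<and> mono_on {0..} G \<and> (G \<longlongrightarrow> 1) at_top \<and>
     (\<forall>b\<ge>0. 0 < g b \<and> (G has_real_derivative g b) (at b within {0..}))"

definition exp_cdf :: "real \<Rightarrow> real" where "exp_cdf t = 1 - exp (- t)"
definition exp_pdf :: "real \<Rightarrow> real" where "exp_pdf t = exp (- t)"

text \<open>Lexicographic order on (characteristic vectors of) finite sets: S is preferred
  to T iff the least element on which they differ belongs to S.\<close>
definition lex_prefer :: "'a::linorder set \<Rightarrow> 'a set \<Rightarrow> bool" where
  "lex_prefer S T \<longleftrightarrow> S \<noteq> T \<and> Min ((S - T) \<union> (T - S)) \<in> S"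

text \<open>Among the revealed bids R, the feasible set maximising the total reported virtual
  value wt (wt i = reported virtual value of bid i at its bid), lexicographic tie-breaking.\<close>
definition dra_alloc :: "'a::linorder set set \<Rightarrow> 'a set \<Rightarrow> ('a \<Rightarrow> real) \<Rightarrow> 'a set" where
  "dra_alloc F R wt = (THE S. S \<in> F \<and> S \<subseteq> R \<and>
      (\<forall>T\<in>F. T \<subseteq> R \<longrightarrow>
         sum wt T < sum wt S \<or> (sum wt T = sum wt S \<and> (T = S \<or> lex_prefer S T))))"

text \<open>Critical bid of the real bidder at slot e, given the revealed fake bids R (with reported
  virtual values wt) and the reported virtual value function phi of the real bidder.\<close>
definition critical_bid :: "'a::linorder set set \<Rightarrow> 'a \<Rightarrow> 'a set \<Rightarrow> ('a \<Rightarrow> real)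
    \<Rightarrow> (real \<Rightarrow> real) \<Rightarrow> real" where
  "critical_bid F e R wt phi = Inf {b. 0 \<le> b \<and> e \<in> dra_alloc F (insert e R) (wt(e := phi b))}"

definition real_payment :: "'a::linorder set set \<Rightarrow> 'a \<Rightarrow> 'a set \<Rightarrow> ('a \<Rightarrow> real)
    \<Rightarrow> (real \<Rightarrow> real) \<Rightarrow> real \<Rightarrow> real" where
  "real_payment F e R wt phi v =
     (if e \<in> dra_alloc F (insert e R) (wt(e := phi v)) then critical_bid F e R wt phi else 0)"

text \<open>K = slots of fake bids, wt = reported virtual values of the fake bids at their bids,
  (G,g) = reported distribution of the real bidder, rv v = fake bids revealed
  after seeing the real bid v; each concealed fake bid burns collateral f.\<close>
definition dra_revenue :: "'a::linorder set set \<Rightarrow> 'a \<Rightarrow> real \<Rightarrow> 'a set \<Rightarrow> ('a \<Rightarrow> real)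
    \<Rightarrow> (real \<Rightarrow> real) \<Rightarrow> (real \<Rightarrow> real) \<Rightarrow> (real \<Rightarrow> 'a set) \<Rightarrow> real \<Rightarrow> real" where
  "dra_revenue F e f K wt G g rv v =
     real_payment F e (rv v) wt (virtual_value G g) v - f * real (card (K - rv v))"

abbreviation exp1_dist :: "real measure" where
  "exp1_dist \<equiv> density lborel (exponential_density 1)"

definition expected_revenue :: "'a::linorder set set \<Rightarrow> 'a \<Rightarrow> real \<Rightarrow> 'a set \<Rightarrow> ('a \<Rightarrow> real)
    \<Rightarrow> (real \<Rightarrow> real) \<Rightarrow> (real \<Rightarrow> real) \<Rightarrow> (real \<Rightarrow> 'a set) \<Rightarrow> real" where
  "expected_revenue F e f K wt G g rv = integral\<^sup>L exp1_dist (dra_revenue F e f K wt G g rv)"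

definition admissible_strategy :: "'a::linorder set \<Rightarrow> 'a set set \<Rightarrow> 'a \<Rightarrow> real \<Rightarrow> 'a set
    \<Rightarrow> ('a \<Rightarrow> real) \<Rightarrow> (real \<Rightarrow> real) \<Rightarrow> (real \<Rightarrow> real) \<Rightarrow> (real \<Rightarrow> 'a set) \<Rightarrow> bool" where
  "admissible_strategy E F e f K wt G g rv \<longleftrightarrow>
     K \<subseteq> E - {e} \<and> (\<forall>v. rv v \<subseteq> K) \<and> valid_report G g \<and>
     integrable exp1_dist (dra_revenue F e f K wt G g rv)"

text \<open>Credibility of the DRA for collateral f in the instance with one real bidder at slot e,
  with Exp(1) value: honest behaviour (no fake bids, true distribution) is revenue optimal.\<close>
definition dra_credible_single :: "'a::linorder set \<Rightarrow> 'a set set \<Rightarrow> 'a \<Rightarrow> real \<Rightarrow> bool" where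
  "dra_credible_single E F e f \<longleftrightarrow>
     (\<forall>K wt G g rv. admissible_strategy E F e f K wt G g rv \<longrightarrow>
        expected_revenue F e f K wt G g rv
          \<le> expected_revenue F e f {} (\<lambda>_. 0) exp_cdf exp_pdf (\<lambda>_. {}))"

end

theory Submission
  imports Defs
begin


lemma lex_trans:
  assumes fin: "finite S" "finite T" "finite U"
    and st: "lex_prefer S T" and tu: "lex_prefer T U"
  shows "lex_prefer S U"
proof -
  define m1 where "m1 = Min ((S - T) \<union> (T - S))"
  define m2 where "m2 = Min ((T - U) \<union> (U - T))"
  have ne1: "(S - T) \<union> (T - S) \<noteq> {}" using st unfolding lex_prefer_def by auto
  have ne2: "(T - U) \<union> (U - T) \<noteq> {}" using tu unfolding lex_prefer_def by auto
  have m1S: "m1 \<in> S" using st unfolding lex_prefer_def m1_def by auto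
  have m2T: "m2 \<in> T" using tu unfolding lex_prefer_def m2_def by auto
  have m1in: "m1 \<in> (S - T) \<union> (T - S)" unfolding m1_def using ne1 fin by (intro Min_in) auto
  have m2in: "m2 \<in> (T - U) \<union> (U - T)" unfolding m2_def using ne2 fin by (intro Min_in) auto
  have a1: "z \<in> S \<longleftrightarrow> z \<in> T" if "z < m1" for z
  proof (rule ccontr)
    assume "\<not> ?thesis"
    then have "z \<in> (S - T) \<union> (T - S)" by auto
    then have "m1 \<le> z" unfolding m1_def using fin by (intro Min_le) auto
    then show False using that by simp
  qed
  have a2: "z \<in> T \<longleftrightarrow> z \<in> U" if "z < m2" for z
  proof (rule ccontr)
    assume "\<not> ?thesis"
    then have "z \<in> (T - U) \<union> (U - T)" by auto
    then have "m2 \<le> z" unfolding m2_def using fin by (intro Min_le) auto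
    then show False using that by simp
  qed
  define m where "m = min m1 m2"
  have mS: "m \<in> S" using m1S m2T a1 unfolding m_def by (cases "m1 \<le> m2") (auto simp: min_def)
  have mU: "m \<notin> U"
  proof (cases m1 m2 rule: linorder_cases)
    case less then show ?thesis using m1in m1S a2[of m1] unfolding m_def by auto
  next
    case equal then show ?thesis using m1in m2T m1S by auto
  next
    case greater then show ?thesis using m2in m2T unfolding m_def by auto
  qed
  have below: "z \<in> S \<longleftrightarrow> z \<in> U" if "z < m" for z using a1 a2 that unfolding m_def by auto
  have min: "Min ((S - U) \<union> (U - S)) = m"
  proof (rule Min_eqI)
    show "finite ((S - U) \<union> (U - S))" using fin by auto
    show "m \<in> (S - U) \<union> (U - S)" using mS mU by auto
    fix y assume "y \<in> (S - U) \<union> (U - S)"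
    then show "m \<le> y" using below[of y] by (cases "y < m") auto
  qed
  show ?thesis unfolding lex_prefer_def min using mS mU by auto
qed

lemma lex_irrefl: "\<not> lex_prefer S S" unfolding lex_prefer_def by auto

lemma lex_total:
  assumes "finite S" "finite T" "S \<noteq> T"
  shows "lex_prefer S T \<or> lex_prefer T S"
proof -
  have ne: "(S - T) \<union> (T - S) \<noteq> {}" using assms by auto
  have "Min ((S - T) \<union> (T - S)) \<in> (S - T) \<union> (T - S)" using ne assms by (intro Min_in) auto
  moreover have "(T - S) \<union> (S - T) = (S - T) \<union> (T - S)" by auto
  ultimately show ?thesis unfolding lex_prefer_def using assms by auto
qed

lemma finite_max_rel:
  assumes "finite X" "X \<noteq> {}" "\<And>a b c. r a b \<Longrightarrow> r b c \<Longrightarrow> r a c" "\<And>a. \<not> r a a"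
  shows "\<exists>m\<in>X. \<forall>y\<in>X. \<not> r y m"
  using assms(1,2)
proof (induction X rule: finite_ne_induct)
  case (singleton x) then show ?case using assms(4) by auto
next
  case (insert x X)
  then obtain m where m: "m \<in> X" "\<forall>y\<in>X. \<not> r y m" by auto
  show ?case
  proof (cases "r x m")
    case True
    then show ?thesis using m assms(3,4) by blast
  next
    case False
    then show ?thesis using m by auto
  qed
qed

definition alloc_ok :: "'a::linorder set set \<Rightarrow> 'a set \<Rightarrow> ('a \<Rightarrow> real) \<Rightarrow> 'a set \<Rightarrow> bool" where
  "alloc_ok F R wt S \<longleftrightarrow> S \<in> F \<and> S \<subseteq> R \<and>
      (\<forall>T\<in>F. T \<subseteq> R \<longrightarrow>
         sum wt T < sum wt S \<or> (sum wt T = sum wt S \<and> (T = S \<or> lex_prefer S T)))"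

lemma alloc_ok:
  assumes "finite R" "{} \<in> F"
  shows "alloc_ok F R wt (dra_alloc F R wt)"
proof -
  define X where "X = {S. S \<in> F \<and> S \<subseteq> R}"
  define r where "r = (\<lambda>S T. sum wt T < sum wt S \<or> (sum wt T = sum wt S \<and> lex_prefer S T))"
  have finX: "finite X" unfolding X_def using assms(1) by (auto intro: finite_subset[of _ "Pow R"])
  have neX: "X \<noteq> {}" unfolding X_def using assms by auto
  have finel: "finite S" if "S \<in> X" for S using that assms(1) unfolding X_def by (auto intro: finite_subset)
  obtain m where m: "m \<in> X" "\<forall>y\<in>X. \<not> r y m"
  proof -
    have "\<exists>m\<in>X. \<forall>y\<in>X. \<not> (\<lambda>a b. a \<in> X \<and> b \<in> X \<and> r a b) y m"
    proof (rule finite_max_rel[OF finX neX])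
      fix a b c assume "a \<in> X \<and> b \<in> X \<and> r a b" "b \<in> X \<and> c \<in> X \<and> r b c"
      then show "a \<in> X \<and> c \<in> X \<and> r a c"
        unfolding r_def using lex_trans[of a b c] finel by auto
    qed (auto simp: r_def lex_irrefl)
    then show ?thesis using that by auto
  qed
  have ok: "alloc_ok F R wt m"
    unfolding alloc_ok_def
  proof (intro conjI ballI impI)
    show "m \<in> F" "m \<subseteq> R" using m unfolding X_def by auto
    fix T assume T: "T \<in> F" "T \<subseteq> R"
    then have TX: "T \<in> X" unfolding X_def by auto
    then have "\<not> r T m" using m by auto
    moreover have "T = m \<or> lex_prefer m T \<or> lex_prefer T m" using lex_total[of m T] finel TX m by auto
    ultimately show "sum wt T < sum wt m \<or> (sum wt T = sum wt m \<and> (T = m \<or> lex_prefer m T))"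
      unfolding r_def by auto
  qed
  have uniq: "S = m" if "alloc_ok F R wt S" for S
  proof (rule ccontr)
    assume ne: "S \<noteq> m"
    have SF: "S \<in> F" "S \<subseteq> R" and Sall: "\<forall>T\<in>F. T \<subseteq> R \<longrightarrow>
         sum wt T < sum wt S \<or> (sum wt T = sum wt S \<and> (T = S \<or> lex_prefer S T))"
      using that unfolding alloc_ok_def by blast+
    have mF: "m \<in> F" "m \<subseteq> R" and mall: "\<forall>T\<in>F. T \<subseteq> R \<longrightarrow>
         sum wt T < sum wt m \<or> (sum wt T = sum wt m \<and> (T = m \<or> lex_prefer m T))"
      using ok unfolding alloc_ok_def by blast+
    have "sum wt m < sum wt S \<or> (sum wt m = sum wt S \<and> lex_prefer S m)"
      using Sall mF ne by blast
    moreover have "sum wt S < sum wt m \<or> (sum wt S = sum wt m \<and> lex_prefer m S)"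
      using mall SF ne by blast
    moreover have "finite S" using SF(2) assms(1) by (rule finite_subset)
    moreover have "finite m" using m finel by auto
    moreover have "\<not> (lex_prefer S m \<and> lex_prefer m S)"
      using lex_trans[of S m S] lex_irrefl[of S] calculation(3,4) by blast
    ultimately show False by auto
  qed
  have eq: "dra_alloc F R wt = (THE S. alloc_ok F R wt S)"
    unfolding dra_alloc_def alloc_ok_def by (rule refl)
  have "dra_alloc F R wt = m"
    unfolding eq using ok uniq by (rule the_equality)
  then show ?thesis using ok by simp
qed


lemma alloc_ok_dra:
  assumes "finite R" "{} \<in> F"
  shows "dra_alloc F R wt \<in> F" "dra_alloc F R wt \<subseteq> R"
    "\<And>T. T \<in> F \<Longrightarrow> T \<subseteq> R \<Longrightarrow> sum wt T \<le> sum wt (dra_alloc F R wt)"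
proof -
  have ok: "alloc_ok F R wt (dra_alloc F R wt)" using alloc_ok[OF assms] .
  show "dra_alloc F R wt \<in> F" "dra_alloc F R wt \<subseteq> R" using ok unfolding alloc_ok_def by blast+
  fix T assume "T \<in> F" "T \<subseteq> R"
  moreover have "\<forall>T\<in>F. T \<subseteq> R \<longrightarrow> sum wt T < sum wt (dra_alloc F R wt) \<or>
     (sum wt T = sum wt (dra_alloc F R wt) \<and> (T = dra_alloc F R wt \<or> lex_prefer (dra_alloc F R wt) T))"
    using ok unfolding alloc_ok_def by blast
  ultimately show "sum wt T \<le> sum wt (dra_alloc F R wt)" by force
qed

lemma win:
  fixes wt :: "'a::linorder \<Rightarrow> real"
  assumes "finite R" "e \<notin> R" "{} \<in> F" "S0 \<subseteq> R" "insert e S0 \<in> F"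
    "\<forall>T\<in>F. T \<subseteq> R \<longrightarrow> sum wt T \<le> t + sum wt S0" "t < y"
  shows "e \<in> dra_alloc F (insert e R) (wt(e:=y))"
proof (rule ccontr)
  define w where "w = wt(e:=y)"
  define S where "S = dra_alloc F (insert e R) w"
  assume "e \<notin> dra_alloc F (insert e R) (wt(e:=y))"
  then have ne: "e \<notin> S" unfolding S_def w_def .
  have fin: "finite (insert e R)" using assms(1) by simp
  have SF: "S \<in> F" "S \<subseteq> insert e R" using alloc_ok_dra[OF fin assms(3)] unfolding S_def by auto
  then have SR: "S \<subseteq> R" using ne by auto
  have s1: "sum w S = sum wt S" using ne unfolding w_def by (intro sum.cong) auto
  have eS0: "e \<notin> S0" using assms(2,4) by auto
  have finS0: "finite S0" using assms(1,4) finite_subset by auto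
  have s0: "sum w S0 = sum wt S0" using eS0 unfolding w_def by (intro sum.cong) auto
  have s2: "sum w (insert e S0) = y + sum wt S0" using eS0 finS0 s0 by (simp add: w_def)
  have "sum w (insert e S0) \<le> sum w S"
    unfolding S_def using alloc_ok_dra(3)[OF fin assms(3) assms(5)] assms(4) by auto
  moreover have "sum wt S \<le> t + sum wt S0" using assms(6) SF SR by auto
  ultimately show False using s1 s2 assms(7) by linarith
qed

lemma lose:
  fixes wt :: "'a::linorder \<Rightarrow> real"
  assumes "finite R" "e \<notin> R" "{} \<in> F" "T0 \<in> F" "T0 \<subseteq> R"
    "\<forall>S. S \<subseteq> R \<longrightarrow> insert e S \<in> F \<longrightarrow> sum wt S + t \<le> sum wt T0" "y < t"
  shows "e \<notin> dra_alloc F (insert e R) (wt(e:=y))"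
proof
  define w where "w = wt(e:=y)"
  define S where "S = dra_alloc F (insert e R) w"
  assume "e \<in> dra_alloc F (insert e R) (wt(e:=y))"
  then have ein: "e \<in> S" unfolding S_def w_def .
  have fin: "finite (insert e R)" using assms(1) by simp
  have SF: "S \<in> F" "S \<subseteq> insert e R" using alloc_ok_dra[OF fin assms(3)] unfolding S_def by auto
  have finS: "finite S" using SF fin finite_subset by auto
  have SR: "S - {e} \<subseteq> R" using SF by auto
  have ins: "insert e (S - {e}) = S" using ein by auto
  have s3: "sum w (S - {e}) = sum wt (S - {e})" unfolding w_def by (intro sum.cong) auto
  have s1: "sum w S = y + sum wt (S - {e})"
    using sum.remove[OF finS ein, of w] s3 unfolding w_def by simp
  have s0: "sum w T0 = sum wt T0" using assms(2,5) unfolding w_def by (intro sum.cong) auto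
  have "sum w T0 \<le> sum w S"
    unfolding S_def using alloc_ok_dra(3)[OF fin assms(3) assms(4)] assms(5) by auto
  moreover have "sum wt (S - {e}) + t \<le> sum wt T0" using assms(6) SR ins SF by auto
  ultimately show False using s1 s0 assms(7) by linarith
qed

lemma inf_thresh:
  fixes S :: "real set"
  assumes "\<And>b. p < b \<Longrightarrow> b \<in> S" "\<And>b. b < p \<Longrightarrow> b \<notin> S"
  shows "Inf S = p"
proof -
  have ne: "S \<noteq> {}" using assms(1)[of "p+1"] by auto
  have lb: "\<And>x. x \<in> S \<Longrightarrow> p \<le> x" using assms(2) by force
  have bdd: "bdd_below S" using lb by (auto simp: bdd_below_def)
  have ge: "p \<le> Inf S" using ne lb by (rule cInf_greatest)
  show ?thesis
  proof (rule ccontr)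
    assume "Inf S \<noteq> p"
    then have lt: "p < Inf S" using ge by auto
    have "(p + Inf S)/2 \<in> S" using assms(1) lt by auto
    then have "Inf S \<le> (p + Inf S)/2" using bdd by (rule cInf_lower)
    then show False using lt by auto
  qed
qed

lemma pay:
  fixes wt :: "'a::linorder \<Rightarrow> real"
  assumes R: "finite R" "e \<notin> R" "{} \<in> F"
    and W: "S0 \<subseteq> R" "insert e S0 \<in> F" "\<forall>T\<in>F. T \<subseteq> R \<longrightarrow> sum wt T \<le> t + sum wt S0"
    and L: "T0 \<in> F" "T0 \<subseteq> R" "\<forall>S. S \<subseteq> R \<longrightarrow> insert e S \<in> F \<longrightarrow> sum wt S + t \<le> sum wt T0"
    and t: "0 \<le> t"
  shows "critical_bid F e R wt (\<lambda>b. b - 1) = 1 + t"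
    and "1 + t < v \<Longrightarrow> real_payment F e R wt (\<lambda>b. b - 1) v = 1 + t"
    and "v < 1 + t \<Longrightarrow> real_payment F e R wt (\<lambda>b. b - 1) v = 0"
    and "real_payment F e R wt (\<lambda>b. b - 1) v = 0 \<or> real_payment F e R wt (\<lambda>b. b - 1) v = 1 + t"
proof -
  show cb: "critical_bid F e R wt (\<lambda>b. b - 1) = 1 + t"
    unfolding critical_bid_def
  proof (rule inf_thresh)
    fix b assume "1 + t < b"
    then show "b \<in> {b. 0 \<le> b \<and> e \<in> dra_alloc F (insert e R) (wt(e := b - 1))}"
      using win[OF R W, of "b - 1"] t by auto
  next
    fix b assume "b < 1 + t"
    then show "b \<notin> {b. 0 \<le> b \<and> e \<in> dra_alloc F (insert e R) (wt(e := b - 1))}"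
      using lose[OF R L, of "b - 1"] by auto
  qed
  show "1 + t < v \<Longrightarrow> real_payment F e R wt (\<lambda>b. b - 1) v = 1 + t"
    unfolding real_payment_def cb using win[OF R W, of "v - 1"] by auto
  show "v < 1 + t \<Longrightarrow> real_payment F e R wt (\<lambda>b. b - 1) v = 0"
    unfolding real_payment_def using lose[OF R L, of "v - 1"] by auto
  show "real_payment F e R wt (\<lambda>b. b - 1) v = 0 \<or> real_payment F e R wt (\<lambda>b. b - 1) v = 1 + t"
    unfolding real_payment_def cb by auto
qed



lemma exp1_prob: "prob_space exp1_dist"
  by (rule prob_space_exponential_density) simp

lemma exp1_sets[simp]: "sets exp1_dist = sets borel" by simp
lemma exp1_space[simp]: "space exp1_dist = UNIV" by simp

lemma exp1_distributed: "distributed exp1_dist lborel (\<lambda>x. x) (exponential_density 1)"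
  unfolding distributed_def
proof (intro conjI)
  show "distr exp1_dist lborel (\<lambda>x. x) = exp1_dist" by (rule distr_id2) simp
qed auto

lemma meas_gt:
  assumes "0 \<le> a"
  shows "measure exp1_dist {a<..} = exp (- a)"
proof -
  have "prob_space.prob exp1_dist {x \<in> space exp1_dist. a < x} = exp (- a * 1)"
    using prob_space.exponential_distributedD_gt[OF exp1_prob exp1_distributed assms] by simp
  moreover have "{x \<in> space exp1_dist. a < x} = {a<..}" by auto
  ultimately show ?thesis by simp
qed

lemma AE_ne: "AE x in exp1_dist. x \<noteq> a"
  by (subst AE_density) (auto intro: eventually_mono[OF AE_lborel_singleton[of a]])

lemma pt_change:
  fixes q :: "real \<Rightarrow> real"
  assumes q: "q \<in> borel_measurable borel" and bnd: "\<And>v. \<bar>q v\<bar> \<le> Bd"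
  shows "integrable exp1_dist (\<lambda>v. if v = a then r else q v)"
    and "integral\<^sup>L exp1_dist (\<lambda>v. if v = a then r else q v) = integral\<^sup>L exp1_dist q"
proof -
  have m: "(\<lambda>v. if v = a then r else q v) \<in> borel_measurable exp1_dist" using q by measurable
  have mq: "q \<in> borel_measurable exp1_dist" using q by measurable
  have ae: "AE v in exp1_dist. (\<lambda>v. if v = a then r else q v) v = q v"
    using AE_ne[of a] by eventually_elim auto
  have iq: "integrable exp1_dist q"
    using finite_measure.integrable_const_bound[of exp1_dist q Bd] exp1_prob mq bnd
    by (simp add: prob_space_def)
  show "integrable exp1_dist (\<lambda>v. if v = a then r else q v)"
    using integrable_cong_AE[OF m mq ae] iq by simp
  show "integral\<^sup>L exp1_dist (\<lambda>v. if v = a then r else q v) = integral\<^sup>L exp1_dist q"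
    by (rule integral_cong_AE[OF m mq ae])
qed

lemma int_honest: "integral\<^sup>L exp1_dist (indicator {1<..} :: real \<Rightarrow> real) = exp (- 1)"
  using meas_gt[of 1] by simp

lemma int_dev:
  assumes "1 \<le> P"
  shows "integral\<^sup>L exp1_dist (\<lambda>v. indicator {1<..P} v + c * indicator {P<..} v :: real)
     = exp (- 1) - exp (- P) + c * exp (- P)"
proof -
  interpret prob_space exp1_dist by (rule exp1_prob)
  have i1: "integrable exp1_dist (indicator {1<..P} :: real \<Rightarrow> real)"
    by (intro integrable_real_indicator) (auto simp: less_top[symmetric])
  have i2: "integrable exp1_dist (\<lambda>v. c * indicator {P<..} v :: real)"
    by (intro integrable_mult_right integrable_real_indicator) (auto simp: less_top[symmetric])
  have "measure exp1_dist {1<..P} = measure exp1_dist ({1<..} - {P<..})"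
    by (rule arg_cong[where f="measure exp1_dist"]) auto
  also have "\<dots> = measure exp1_dist {1<..} - measure exp1_dist {P<..}"
    using assms by (intro measure_Diff) auto
  finally have "measure exp1_dist {1<..P} = exp (-1) - exp (- P)"
    using meas_gt[of 1] meas_gt[of P] assms by simp
  then show ?thesis
    using Bochner_Integration.integral_add[OF i1 i2] meas_gt[of P] assms by simp
qed

lemma vv_exp: "virtual_value exp_cdf exp_pdf = (\<lambda>b. b - 1)"
  by (auto simp: fun_eq_iff virtual_value_def exp_cdf_def exp_pdf_def)

lemma valid_exp: "valid_report exp_cdf exp_pdf"
  unfolding valid_report_def
proof (intro conjI allI impI)
  show "exp_cdf 0 = 0" by (simp add: exp_cdf_def)
  show "mono_on {0..} exp_cdf" by (auto intro!: mono_onI simp: exp_cdf_def)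
  show "(exp_cdf \<longlongrightarrow> 1) at_top"
  proof -
    have "((\<lambda>t::real. exp (- t)) \<longlongrightarrow> 0) at_top"
      by (rule filterlim_compose[OF exp_at_bot filterlim_uminus_at_bot_at_top])
    then have "((\<lambda>t::real. 1 - exp (- t)) \<longlongrightarrow> 1 - 0) at_top" by (intro tendsto_intros)
    then show ?thesis by (simp add: exp_cdf_def[abs_def])
  qed
  fix b :: real
  show "0 < exp_pdf b" by (simp add: exp_pdf_def)
  show "(exp_cdf has_real_derivative exp_pdf b) (at b within {0..})"
    unfolding exp_cdf_def[abs_def] exp_pdf_def
    by (auto intro!: derivative_eq_intros)
qed



lemma min_pair:
  assumes fin: "finite E" and dc: "downward_closed E F" and nm: "\<not> is_matroid E F"
  obtains A B x where "A \<in> F" "B \<in> F" "x \<in> A" "x \<notin> B" "insert x B \<notin> F"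
     "\<forall>b\<in>B - A. insert b (A - {x}) \<notin> F"
proof -
  have sub: "F \<subseteq> Pow E" and dcl: "\<forall>A\<in>F. \<forall>B. B \<subseteq> A \<longrightarrow> B \<in> F"
    using dc unfolding downward_closed_def by auto
  define V where "V = (\<lambda>p. fst p \<in> F \<and> snd p \<in> F \<and> card (snd p) < card (fst p) \<and>
      (\<forall>a\<in>fst p - snd p. insert a (snd p) \<notin> F))"
  have "\<not> (\<forall>A\<in>F. \<forall>B\<in>F. card A > card B \<longrightarrow> (\<exists>a\<in>A - B. insert a B \<in> F))"
    using nm dc unfolding is_matroid_def by blast
  then obtain A0 B0 where "A0 \<in> F" "B0 \<in> F" "card B0 < card A0" "\<forall>a\<in>A0 - B0. insert a B0 \<notin> F"
    by blast
  then have "V (A0, B0)" unfolding V_def by simp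
  then have "\<exists>p. V p \<and> (\<forall>q. V q \<longrightarrow> card (fst p \<union> snd p) \<le> card (fst q \<union> snd q))"
    by (rule ex_has_least_nat)
  then obtain p where p: "V p" and pmin: "\<forall>q. V q \<longrightarrow> card (fst p \<union> snd p) \<le> card (fst q \<union> snd q)"
    by blast
  define A where "A = fst p"
  define B where "B = snd p"
  have AF: "A \<in> F" and BF: "B \<in> F" and cAB: "card B < card A" and viol: "\<forall>a\<in>A - B. insert a B \<notin> F"
    using p unfolding V_def A_def B_def by blast+
  have finA: "finite A" and finB: "finite B" using AF BF sub fin by (meson PowD finite_subset subsetD)+
  have "\<not> A \<subseteq> B"
  proof
    assume "A \<subseteq> B"
    then have "card A \<le> card B" using card_mono[OF finB] by blast
    then show False using cAB by linarith
  qed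
  then obtain x where xA: "x \<in> A" and xB: "x \<notin> B" by auto
  have key: "\<forall>b\<in>B - A. insert b (A - {x}) \<notin> F"
  proof (intro ballI notI)
    fix b assume b: "b \<in> B - A" and CF: "insert b (A - {x}) \<in> F"
    define C where "C = insert b (A - {x})"
    have c1: "card (A - {x}) = card A - 1" using xA finA by (simp add: card_Diff_singleton)
    have c2: "b \<notin> A - {x}" using b by auto
    have c3: "card C = Suc (card (A - {x}))" unfolding C_def using c2 finA by (simp add: card_insert_disjoint)
    have c4: "0 < card A" using cAB by simp
    have cC: "card C = card A" using c1 c3 c4 by simp
    have vC: "\<forall>a\<in>C - B. insert a B \<notin> F"
    proof
      fix a assume "a \<in> C - B"
      then have "a \<in> A - B" unfolding C_def using b by auto
      then show "insert a B \<notin> F" using viol by blast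
    qed
    have "V (C, B)" unfolding V_def fst_conv snd_conv using CF BF cAB cC vC unfolding C_def by simp
    then have "card (A \<union> B) \<le> card (C \<union> B)" using pmin[rule_format, of "(C, B)"] unfolding A_def B_def by simp
    moreover have "C \<union> B = (A \<union> B) - {x}" unfolding C_def using b xB by auto
    moreover have "card ((A \<union> B) - {x}) < card (A \<union> B)"
      using xA finA finB by (intro card_Diff1_less) auto
    ultimately show False by simp
  qed
  show ?thesis using that[OF AF BF xA xB viol[rule_format, of x] key] xA xB by auto
qed



theorem mainTheorem4:
  fixes E :: "'a::linorder set" and F :: "'a set set" and f :: real
  assumes "finite E" and "downward_closed E F" and "\<not> is_matroid E F" and "0 \<le> f"
  shows "\<exists>e\<in>E. \<not> dra_credible_single E F e f"
proof -
  obtain A B x where AF: "A \<in> F" and BF: "B \<in> F" and xA: "x \<in> A" and xB: "x \<notin> B"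
    and xBF: "insert x B \<notin> F" and key: "\<forall>b\<in>B - A. insert b (A - {x}) \<notin> F"
    using min_pair[OF assms(1-3)] by blast
  have sub: "F \<subseteq> Pow E" and dcl: "\<forall>A\<in>F. \<forall>B. B \<subseteq> A \<longrightarrow> B \<in> F"
    using assms(2) unfolding downward_closed_def by auto
  have dcl': "\<And>X Y. X \<in> F \<Longrightarrow> Y \<subseteq> X \<Longrightarrow> Y \<in> F" using dcl by blast
  have AE: "A \<subseteq> E" and BE: "B \<subseteq> E" using AF BF sub by blast+
  have finA: "finite A" and finB: "finite B" using AE BE assms(1) finite_subset by blast+
  have xE: "x \<in> E" using AE xA by blast
  have emp: "{} \<in> F" using dcl'[OF AF] by blast
  have xF: "insert x {} \<in> F" using dcl'[OF AF] xA by blast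
  define N :: real where "N = real (card B) + 1"
  have N1: "1 \<le> N" unfolding N_def by simp
  define u where "u = (\<lambda>y. if y \<in> A then N else 1::real)"
  have u1: "\<And>y. 1 \<le> u y" unfolding u_def using N1 by simp
  define K where "K = (A \<union> B) - {x}"
  have finK: "finite K" unfolding K_def using finA finB by simp
  have xK: "x \<notin> K" unfolding K_def by simp
  have sumu: "sum u T = N * real (card (T \<inter> A)) + real (card (T - A))" if "finite T" for T
  proof -
    have "sum u T = sum u (T \<inter> A) + sum u (T - A)" using that by (rule sum.Int_Diff)
    moreover have "sum u (T \<inter> A) = sum (\<lambda>_. N) (T \<inter> A)" unfolding u_def by (rule sum.cong) auto
    moreover have "sum u (T - A) = sum (\<lambda>_. 1) (T - A)" unfolding u_def by (rule sum.cong) auto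
    ultimately show ?thesis by (simp add: mult.commute)
  qed
  have sA: "sum u (A - {x}) = N * real (card (A - {x}))"
  proof -
    have "(A - {x}) \<inter> A = A - {x}" "(A - {x}) - A = {}" by auto
    then show ?thesis using sumu[of "A - {x}"] finA by simp
  qed
  have C1: "sum u T \<le> sum u (A - {x})" if TF: "T \<in> F" and TK: "T \<subseteq> K" for T
  proof -
    have finT: "finite T" using TK finK finite_subset by blast
    show ?thesis
    proof (cases "A - {x} \<subseteq> T")
      case True
      have tA: "T - A = {}"
      proof (rule ccontr)
        assume "T - A \<noteq> {}"
        then obtain b where b: "b \<in> T" "b \<notin> A" by blast
        then have bB: "b \<in> B - A" using TK unfolding K_def by blast
        have "insert b (A - {x}) \<subseteq> T" using True b by blast
        then have "insert b (A - {x}) \<in> F" using dcl'[OF TF] by blast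
        then show False using key bB by blast
      qed
      have TA: "T \<inter> A = A - {x}" using True TK xK by blast
      have "sum u T = N * real (card (A - {x}))" using sumu[OF finT] unfolding TA tA by simp
      then show ?thesis using sA by simp
    next
      case False
      then obtain a where a: "a \<in> A" "a \<noteq> x" "a \<notin> T" by blast
      have s1: "T \<inter> A \<subseteq> (A - {x}) - {a}" using TK xK a unfolding K_def by blast
      have "card (T \<inter> A) \<le> card ((A - {x}) - {a})" using s1 finA by (intro card_mono) auto
      moreover have "card ((A - {x}) - {a}) = card (A - {x}) - 1"
        using a finA by (intro card_Diff_singleton) auto
      moreover have cpos: "1 \<le> card (A - {x})"
      proof -
        have "a \<in> A - {x}" using a by blast
        then have "card (A - {x}) \<noteq> 0" using finA by auto
        then show ?thesis by linarith
      qed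
      ultimately have c1: "real (card (T \<inter> A)) \<le> real (card (A - {x})) - 1" by linarith
      have "card (T - A) \<le> card B" using TK finB unfolding K_def by (intro card_mono) auto
      then have c2: "real (card (T - A)) \<le> N - 1" unfolding N_def by simp
      have "N * real (card (T \<inter> A)) \<le> N * (real (card (A - {x})) - 1)"
        using c1 N1 by (intro mult_left_mono) auto
      then show ?thesis using sumu[OF finT] sA c2 by (simp add: algebra_simps)
    qed
  qed
  define SS where "SS = {S. S \<subseteq> B \<and> insert x S \<in> F}"
  have finSS: "finite SS" unfolding SS_def using finB by simp
  have SSne: "{} \<in> SS" unfolding SS_def using xF by simp
  obtain S0 where S0: "S0 \<in> SS" and S0max: "\<And>S. S \<in> SS \<Longrightarrow> sum u S \<le> sum u S0"
  proof -
    have "Max (sum u ` SS) \<in> sum u ` SS" using finSS SSne by (intro Max_in) auto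
    then obtain S0 where "S0 \<in> SS" "sum u S0 = Max (sum u ` SS)" by auto
    moreover have "\<And>S. S \<in> SS \<Longrightarrow> sum u S \<le> Max (sum u ` SS)" using finSS by simp
    ultimately show ?thesis using that by metis
  qed
  have S0B: "S0 \<subseteq> B" and S0F: "insert x S0 \<in> F" using S0 unfolding SS_def by auto
  define \<tau> where "\<tau> = sum u B - sum u S0"
  have tau1: "1 \<le> \<tau>"
  proof -
    have "S0 \<noteq> B" using S0F xBF by blast
    then obtain b where b: "b \<in> B - S0" using S0B by blast
    have "sum u B = sum u (B - S0) + sum u S0" using S0B finB by (rule sum.subset_diff)
    moreover have "u b \<le> sum u (B - S0)"
      using b finB u1 by (intro member_le_sum) (auto intro: order_trans[OF zero_le_one])
    ultimately show ?thesis unfolding \<tau>_def using u1[of b] by linarith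
  qed
  define n where "n = card (K - B)"
  define L :: real where "L = f * real n + 1"
  have L1: "1 \<le> L" unfolding L_def using assms(4) by simp
  define wt where "wt = (\<lambda>y. L * u y)"
  have swt: "\<And>T. sum wt T = L * sum u T" unfolding wt_def by (simp add: sum_distrib_left)
  define t where "t = L * \<tau>"
  have tL: "L \<le> t" unfolding t_def using tau1 L1 mult_left_mono[of 1 \<tau> L] by simp
  define P where "P = 1 + t"
  define c where "c = P - f * real n"
  have c1: "1 < c" unfolding c_def P_def L_def using tL L_def by simp
  have P1: "1 < P" unfolding P_def using tL L1 by simp
  define rv where "rv = (\<lambda>v::real. if v \<le> P then K else B)"
  note payK = pay[of K x F "A - {x}" wt 0 "A - {x}"]
  have hK: "finite K" "x \<notin> K" "{} \<in> F" "A - {x} \<subseteq> K" "insert x (A - {x}) \<in> F"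
    "\<forall>T\<in>F. T \<subseteq> K \<longrightarrow> sum wt T \<le> 0 + sum wt (A - {x})"
    "A - {x} \<in> F" "A - {x} \<subseteq> K"
    "\<forall>S. S \<subseteq> K \<longrightarrow> insert x S \<in> F \<longrightarrow> sum wt S + 0 \<le> sum wt (A - {x})" "(0::real) \<le> 0"
  proof -
    show "finite K" "x \<notin> K" "{} \<in> F" by (fact finK xK emp)+
    show "A - {x} \<subseteq> K" "A - {x} \<subseteq> K" unfolding K_def by blast+
    show "insert x (A - {x}) \<in> F" using xA AF by (simp add: insert_absorb)
    show "A - {x} \<in> F" using dcl'[OF AF] by blast
    show "(0::real) \<le> 0" by simp
    show "\<forall>T\<in>F. T \<subseteq> K \<longrightarrow> sum wt T \<le> 0 + sum wt (A - {x})"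
      using C1 L1 by (simp add: swt mult_left_mono)
    show "\<forall>S. S \<subseteq> K \<longrightarrow> insert x S \<in> F \<longrightarrow> sum wt S + 0 \<le> sum wt (A - {x})"
    proof (intro allI impI)
      fix S assume "S \<subseteq> K" "insert x S \<in> F"
      moreover then have "S \<in> F" using dcl' by blast
      ultimately show "sum wt S + 0 \<le> sum wt (A - {x})"
        using C1 L1 by (simp add: swt mult_left_mono)
    qed
  qed
  note pK = payK[OF hK]
  have hB: "finite B" "x \<notin> B" "{} \<in> F" "S0 \<subseteq> B" "insert x S0 \<in> F"
    "\<forall>T\<in>F. T \<subseteq> B \<longrightarrow> sum wt T \<le> t + sum wt S0"
    "B \<in> F" "B \<subseteq> B"
    "\<forall>S. S \<subseteq> B \<longrightarrow> insert x S \<in> F \<longrightarrow> sum wt S + t \<le> sum wt B" "0 \<le> t"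
  proof -
    show "finite B" "x \<notin> B" "{} \<in> F" "S0 \<subseteq> B" "insert x S0 \<in> F" "B \<in> F" "B \<subseteq> B"
      by (fact finB xB emp S0B S0F BF subset_refl)+
    show "0 \<le> t" using tL L1 by simp
    have eq: "t + sum wt S0 = L * sum u B" unfolding t_def \<tau>_def swt by (simp add: algebra_simps)
    show "\<forall>T\<in>F. T \<subseteq> B \<longrightarrow> sum wt T \<le> t + sum wt S0"
    proof (intro ballI impI)
      fix T assume "T \<in> F" "T \<subseteq> B"
      then have "sum u T \<le> sum u B" using finB u1 by (intro sum_mono2) (auto intro: order_trans[OF zero_le_one])
      then have "L * sum u T \<le> L * sum u B" using L1 by (simp add: mult_left_mono)
      then show "sum wt T \<le> t + sum wt S0" using eq swt by simp
    qed
    show "\<forall>S. S \<subseteq> B \<longrightarrow> insert x S \<in> F \<longrightarrow> sum wt S + t \<le> sum wt B"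
    proof (intro allI impI)
      fix S assume "S \<subseteq> B" "insert x S \<in> F"
      then have "S \<in> SS" unfolding SS_def by blast
      then have "sum u S \<le> sum u S0" by (rule S0max)
      then have "L * sum u S \<le> L * sum u S0" using L1 by (simp add: mult_left_mono)
      then show "sum wt S + t \<le> sum wt B" unfolding swt t_def \<tau>_def by (simp add: algebra_simps)
    qed
  qed
  note pB = pay[OF hB]
  define d where "d = dra_revenue F x f K wt exp_cdf exp_pdf rv"
  have d_eq: "\<And>v. d v = real_payment F x (rv v) wt (\<lambda>b. b - 1) v - f * real (card (K - rv v))"
    unfolding d_def dra_revenue_def vv_exp by simp
  define g where "g = (\<lambda>v. indicator {1<..P} v + c * indicator {P<..} v :: real)"
  have dg: "d v = g v" if "v \<noteq> 1" for v
  proof (cases "v \<le> P")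
    case True
    then have rvK: "rv v = K" unfolding rv_def by simp
    show ?thesis
    proof (cases "v < 1")
      case True
      then show ?thesis using pK(3)[of v] rvK \<open>v \<le> P\<close> P1 unfolding d_eq g_def by (simp add: indicator_def)
    next
      case False
      then have "1 < v" using that by simp
      then show ?thesis using pK(2)[of v] rvK \<open>v \<le> P\<close> unfolding d_eq g_def by (simp add: indicator_def)
    qed
  next
    case False
    then have rvB: "rv v = B" unfolding rv_def by simp
    have "1 + t < v" using False unfolding P_def by simp
    then show ?thesis using pB(2)[of v] rvB False P1 unfolding d_eq g_def c_def n_def P_def
      by (simp add: indicator_def)
  qed
  have d1: "0 \<le> d 1"
  proof -
    have "rv 1 = K" unfolding rv_def using P1 by simp
    then show ?thesis using pK(4)[of 1] unfolding d_eq by auto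
  qed
  have dform: "d = (\<lambda>v. if v = 1 then d 1 else g v)" using dg by (auto simp: fun_eq_iff)
  have gm: "g \<in> borel_measurable borel" unfolding g_def by measurable
  have gb: "\<And>v. \<bar>g v\<bar> \<le> 1 + \<bar>c\<bar>" unfolding g_def by (simp add: indicator_def)
  have dint: "integrable exp1_dist d" using pt_change(1)[OF gm gb, of 1 "d 1"] dform by simp
  have dval: "integral\<^sup>L exp1_dist d = exp (- 1) - exp (- P) + c * exp (- P)"
    using pt_change(2)[OF gm gb, of 1 "d 1"] dform int_dev[of P c] P1 unfolding g_def by simp
  define h where "h = dra_revenue F x f {} (\<lambda>_. 0) exp_cdf exp_pdf (\<lambda>_. {})"
  have hH: "finite {}" "x \<notin> {}" "{} \<in> F" "{} \<subseteq> {}" "insert x {} \<in> F"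
    "\<forall>T\<in>F. T \<subseteq> {} \<longrightarrow> sum (\<lambda>_. 0::real) T \<le> 0 + sum (\<lambda>_. 0) {}"
    "{} \<in> F" "{} \<subseteq> {}"
    "\<forall>S. S \<subseteq> {} \<longrightarrow> insert x S \<in> F \<longrightarrow> sum (\<lambda>_. 0::real) S + 0 \<le> sum (\<lambda>_. 0) {}" "(0::real) \<le> 0"
    using emp xF by auto
  note pH = pay[OF hH]
  have h_eq: "\<And>v. h v = real_payment F x {} (\<lambda>_. 0) (\<lambda>b. b - 1) v"
    unfolding h_def dra_revenue_def vv_exp by simp
  have hg: "h v = indicator {1<..} v" if "v \<noteq> 1" for v
  proof (cases "v < 1")
    case True then show ?thesis using pH(3)[of v] unfolding h_eq by (simp add: indicator_def)
  next
    case False then have "1 < v" using that by simp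
    then show ?thesis using pH(2)[of v] unfolding h_eq by (simp add: indicator_def)
  qed
  have hform: "h = (\<lambda>v. if v = 1 then h 1 else indicator {1<..} v)" using hg by (auto simp: fun_eq_iff)
  have hm: "(indicator {1<..} :: real \<Rightarrow> real) \<in> borel_measurable borel" by measurable
  have hb: "\<And>v. \<bar>(indicator {1<..} v :: real)\<bar> \<le> 1" by (simp add: indicator_def)
  have hval: "integral\<^sup>L exp1_dist h = exp (- 1)"
    using pt_change(2)[OF hm hb, of 1 "h 1"] hform int_honest by simp
  have gain: "integral\<^sup>L exp1_dist h < integral\<^sup>L exp1_dist d"
  proof -
    have "0 < (c - 1) * exp (- P)" using c1 by simp
    then show ?thesis unfolding hval dval by (simp add: algebra_simps)
  qed
  have adm: "admissible_strategy E F x f K wt exp_cdf exp_pdf rv"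
    unfolding admissible_strategy_def
  proof (intro conjI allI)
    show "K \<subseteq> E - {x}" unfolding K_def using AE BE by blast
    fix v show "rv v \<subseteq> K" unfolding rv_def K_def using xB by auto
  next
    show "valid_report exp_cdf exp_pdf" by (rule valid_exp)
    show "integrable exp1_dist (dra_revenue F x f K wt exp_cdf exp_pdf rv)" using dint unfolding d_def .
  qed
  have "\<not> dra_credible_single E F x f"
    unfolding dra_credible_single_def expected_revenue_def
    using adm gain unfolding d_def h_def by force
  then show ?thesis using xE by blast
qed


end
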